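(* Let $L=(G,l)$ be a linkage whose underlying graph $G$ is series parallel. Then $L$ is realisable if and only if for every subgraph $H$ of $G$ that is a polygonal graph, the linkage $(H,l|_H)$ is realisable.
   Context: A graph has a finite vertex set and a finite multiset of edges, each an unordered pair of distinct vertices (parallel edges allowed, no loops). A polygonal graph is a graph isomorphic to the graph with vertex set $\{1,\dots,n\}$ ($n\ge2$) and edge multiset $\{\{i,i+1\}:1\le i\le n-1\}\cup\{\{n,1\}\}$ (for $n=2$ this is two parallel edges). A linkage is $L=(G,l)$ with $l:E\to\mathbb R_{\ge0}$; it is realisable if there exists $p:V\to\mathbb R^2$ with $|p(u)-p(v)|=l(\{u,v\})$ for every edge $\{u,v\}$. A TTG is $(G,s,t)$ with $s\ne t$; series composition $(G_1,s_1,t_1)\circ(G_2,s_2,t_2)=(G_1\cup_{t_2\sim s_1}G_2,s_2,t_1)$; parallel composition $(G_1,s_1,t_1)\|(G_2,s_2,t_2)=(G_1\cup_{s_1\sim s_2,t_1\sim t_2}G_2,s_1,t_1)$. TTSPGs are the smallest class of TTGs containing a single edge $(K_2,s,t)$ and closed under both compositions; $G$ is series parallel if $(G,s,t)$ is a TTSPG for some $s,t$. *)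

theory Defs
  imports "HOL-Analysis.Analysis"
begin

text \<open>Parallel edges = distinct labels with the same ends; no loops.\<close>

definition graph :: "'v set \<Rightarrow> 'e set \<Rightarrow> ('e \<Rightarrow> 'v set) \<Rightarrow> bool" where
  "graph V E ends \<longleftrightarrow> finite V \<and> finite E \<and>
     (\<forall>e\<in>E. ends e \<subseteq> V \<and> card (ends e) = 2)"

definition subgraph :: "'v set \<Rightarrow> 'e set \<Rightarrow> 'v set \<Rightarrow> 'e set \<Rightarrow> ('e \<Rightarrow> 'v set) \<Rightarrow> bool" where
  "subgraph V' E' V E ends \<longleftrightarrow> V' \<subseteq> V \<and> E' \<subseteq> E \<and> (\<forall>e\<in>E'. ends e \<subseteq> V')"

definition polygonal :: "'v set \<Rightarrow> 'e set \<Rightarrow> ('e \<Rightarrow> 'v set) \<Rightarrow> bool" where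
  "polygonal V E ends \<longleftrightarrow> (\<exists>n::nat. n \<ge> 2 \<and>
     (\<exists>f g. bij_betw f {0..<n} V \<and> bij_betw g {0..<n} E \<and>
        (\<forall>i<n. ends (g i) = {f i, f ((i + 1) mod n)})))"

definition realisable :: "'v set \<Rightarrow> 'e set \<Rightarrow> ('e \<Rightarrow> 'v set) \<Rightarrow> ('e \<Rightarrow> real) \<Rightarrow> bool" where
  "realisable V E ends l \<longleftrightarrow> (\<exists>p :: 'v \<Rightarrow> real^2.
     \<forall>e\<in>E. \<forall>u v. ends e = {u, v} \<longrightarrow> dist (p u) (p v) = l e)"

inductive ttspg :: "('e \<Rightarrow> 'v set) \<Rightarrow> 'v set \<Rightarrow> 'e set \<Rightarrow> 'v \<Rightarrow> 'v \<Rightarrow> bool"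
  for ends :: "'e \<Rightarrow> 'v set" where
  edge: "s \<noteq> t \<Longrightarrow> ends e = {s, t} \<Longrightarrow> ttspg ends {s, t} {e} s t"
| series: "ttspg ends V1 E1 s1 t1 \<Longrightarrow> ttspg ends V2 E2 s2 t2 \<Longrightarrow> t2 = s1 \<Longrightarrow>
           V1 \<inter> V2 = {s1} \<Longrightarrow> E1 \<inter> E2 = {} \<Longrightarrow>
           ttspg ends (V1 \<union> V2) (E1 \<union> E2) s2 t1"
| parallel: "ttspg ends V1 E1 s1 t1 \<Longrightarrow> ttspg ends V2 E2 s2 t2 \<Longrightarrow> s1 = s2 \<Longrightarrow> t1 = t2 \<Longrightarrow>
           V1 \<inter> V2 = {s1, t1} \<Longrightarrow> E1 \<inter> E2 = {} \<Longrightarrow>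
           ttspg ends (V1 \<union> V2) (E1 \<union> E2) s1 t1"

definition series_parallel :: "'v set \<Rightarrow> 'e set \<Rightarrow> ('e \<Rightarrow> 'v set) \<Rightarrow> bool" where
  "series_parallel V E ends \<longleftrightarrow> (\<exists>s t. ttspg ends V E s t)"

end

theory Submission
  imports Defs
begin


lemma dist2: "dist (x::real^2) y = sqrt((x$1-y$1)^2 + (x$2-y$2)^2)"
  by (simp add: dist_vec_def L2_set_def UNIV_2 dist_real_def)

lemma triangle_exists:
  fixes d d1 d2 :: real
  assumes "0 \<le> d1" "0 \<le> d2" "\<bar>d1 - d2\<bar> \<le> d" "d \<le> d1 + d2"
  shows "\<exists>A B C :: real^2. dist A B = d2 \<and> dist B C = d1 \<and> dist A C = d"
proof (cases "d2 = 0")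
  case True
  then have "d = d1" using assms by auto
  show ?thesis
    by (rule exI[of _ 0], rule exI[of _ 0], rule exI[of _ "vector [d1, 0]"])
       (simp add: dist2 True \<open>d = d1\<close> assms)
next
  case False
  then have d2p: "d2 > 0" using assms by auto
  define x where "x = (d1^2 + d2^2 - d^2) / (2*d2)"
  have h1: "(d1 - d2)^2 \<le> d^2" using power_mono[of "\<bar>d1-d2\<bar>" d 2] assms
    by simp
  have h2: "d^2 \<le> (d1+d2)^2" using power_mono[of d "d1+d2" 2] assms
    by linarith
  have "\<bar>d1^2 + d2^2 - d^2\<bar> \<le> 2*d1*d2" using h1 h2
    by (simp add: power2_eq_square algebra_simps abs_le_iff)
  then have "\<bar>x\<bar> \<le> d1" using d2p
    by (simp add: x_def abs_divide divide_le_eq) 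
  then have xx: "x^2 \<le> d1^2"
    using power_mono[of "\<bar>x\<bar>" d1 2] by simp
  define y where "y = sqrt (d1^2 - x^2)"
  have yy: "y^2 = d1^2 - x^2" using xx by (simp add: y_def)
  have e1: "x^2 + y^2 = d1^2" using yy by simp
  have e2: "(d2 - x)^2 + y^2 = d^2"
  proof -
    have "2*d2*x = d1^2 + d2^2 - d^2" using d2p by (simp add: x_def)
    then show ?thesis using yy by (simp add: power2_eq_square algebra_simps)
  qed
  have dd: "d \<ge> 0" using assms by linarith
  show ?thesis
    apply (rule exI[of _ "vector [d2, 0]"], rule exI[of _ 0], rule exI[of _ "vector [x, y]"])
    using e1 e2 assms dd by (simp add: dist2)
qed

lemma isometry_exists:
  fixes a b c d :: "real^2"
  assumes "dist a b = dist c d"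
  shows "\<exists>T. (\<forall>x y. dist (T x) (T y) = dist x y) \<and> T a = c \<and> T b = d"
proof -
  have "norm (b - a) = norm (d - c)" using assms by (simp add: dist_norm norm_minus_commute)
  then obtain f where f: "orthogonal_transformation f" "f (b - a) = d - c"
    by (rule orthogonal_transformation_exists)
  have lin: "linear f" using f(1) by (simp add: orthogonal_transformation_linear)
  define T where "T x = c + f (x - a)" for x
  have "\<forall>x y. dist (T x) (T y) = dist x y"
  proof (intro allI)
    fix x y
    have "T x - T y = f (x - y)" unfolding T_def using lin
      by (simp add: linear_diff[symmetric] algebra_simps)
    then show "dist (T x) (T y) = dist x y" using f(1)
      by (simp add: dist_norm orthogonal_transformation_norm)
  qed
  moreover have "T a = c" using lin by (simp add: T_def linear_0)
  moreover have "T b = d" using f by (simp add: T_def)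
  ultimately show ?thesis by blast
qed



definition is_path :: "('e \<Rightarrow> 'v set) \<Rightarrow> 'v set \<Rightarrow> 'e set \<Rightarrow> 'v \<Rightarrow> 'v \<Rightarrow> 'e set \<Rightarrow> bool" where
  "is_path ends V E a b P \<longleftrightarrow> (\<exists>k f g. f 0 = a \<and> f k = b \<and> inj_on f {0..k} \<and> inj_on g {0..<k} \<and>
     (\<forall>i<k. ends (g i) = {f i, f (Suc i)}) \<and> f ` {0..k} \<subseteq> V \<and> g ` {0..<k} \<subseteq> E \<and> P = g ` {0..<k})"

lemma path_sub: "is_path ends V E a b P \<Longrightarrow> finite P \<and> P \<subseteq> E"
  unfolding is_path_def by auto

lemma path_mono: "is_path ends V E a b P \<Longrightarrow> V \<subseteq> V' \<Longrightarrow> E \<subseteq> E' \<Longrightarrow> is_path ends V' E' a b P"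
  unfolding is_path_def
  apply (elim exE conjE)
  subgoal for k f g
    apply (intro exI[of _ k] exI[of _ f] exI[of _ g])
    by (intro conjI) auto
  done

lemma path_edge: "s \<noteq> t \<Longrightarrow> ends e = {s, t} \<Longrightarrow> is_path ends {s,t} {e} s t {e}"
  unfolding is_path_def
  apply (rule exI[of _ 1], rule exI[of _ "\<lambda>i. if i = 0 then s else t"], rule exI[of _ "\<lambda>_. e"])
  by (auto simp: inj_on_def)

lemma path_rev:
  assumes "is_path ends V E a b P" shows "is_path ends V E b a P"
proof -
  obtain k f g where p: "f 0 = a" "f k = b" "inj_on f {0..k}" "inj_on g {0..<k}"
     "\<forall>i<k. ends (g i) = {f i, f (Suc i)}" "f ` {0..k} \<subseteq> V" "g ` {0..<k} \<subseteq> E" "P = g ` {0..<k}"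
    using assms unfolding is_path_def by blast
  define f' where "f' i = f (k - i)" for i
  define g' where "g' i = g (k - Suc i)" for i
  have "f' 0 = b" "f' k = a" using p by (auto simp: f'_def)
  moreover have "inj_on f' {0..k}"
  proof (rule inj_onI)
    fix i j assume ij: "i \<in> {0..k}" "j \<in> {0..k}" "f' i = f' j"
    then have "k - i = k - j" using inj_onD[OF p(3), of "k-i" "k-j"] by (simp add: f'_def)
    then show "i = j" using ij by simp
  qed
  moreover have "inj_on g' {0..<k}"
  proof (rule inj_onI)
    fix i j assume ij: "i \<in> {0..<k}" "j \<in> {0..<k}" "g' i = g' j"
    then have "k - Suc i = k - Suc j" using inj_onD[OF p(4), of "k - Suc i" "k - Suc j"] by (simp add: g'_def)
    then show "i = j" using ij by simp
  qed
  moreover have "\<forall>i<k. ends (g' i) = {f' i, f' (Suc i)}"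
  proof (intro allI impI)
    fix i assume "i < k"
    then have h: "k - Suc i < k" "Suc (k - Suc i) = k - i" by auto
    have e: "ends (g (k - Suc i)) = {f (k - Suc i), f (k - i)}"
      using p(5)[rule_format, OF h(1)] h(2) by simp
    have "{f (k - Suc i), f (k - i)} = {f (k - i), f (k - Suc i)}" by (rule insert_commute)
    moreover have "f' (Suc i) = f (k - Suc i)" by (simp add: f'_def)
    ultimately show "ends (g' i) = {f' i, f' (Suc i)}" using e by (simp add: g'_def f'_def)
  qed
  moreover have "f' ` {0..k} \<subseteq> V" using p(6) by (auto simp: f'_def)
  moreover have "g' ` {0..<k} = g ` {0..<k}"
  proof
    show "g' ` {0..<k} \<subseteq> g ` {0..<k}" by (auto simp: g'_def)
    show "g ` {0..<k} \<subseteq> g' ` {0..<k}"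
    proof
      fix x assume "x \<in> g ` {0..<k}"
      then obtain i where i: "i < k" "x = g i" by auto
      then have "g' (k - Suc i) = x" by (simp add: g'_def Suc_diff_Suc)
      moreover have "k - Suc i \<in> {0..<k}" using i by simp
      ultimately show "x \<in> g' ` {0..<k}" by (metis image_eqI)
    qed
  qed
  ultimately show ?thesis unfolding is_path_def using p
    apply (intro exI[of _ k] exI[of _ f'] exI[of _ g'])
    by (intro conjI) auto
qed

lemma path_concat:
  assumes "is_path ends V1 E1 a b P1" "is_path ends V2 E2 b c P2"
    "V1 \<inter> V2 = {b}" "E1 \<inter> E2 = {}"
  shows "is_path ends (V1 \<union> V2) (E1 \<union> E2) a c (P1 \<union> P2)"
proof -
  obtain k1 f1 g1 where p: "f1 0 = a" "f1 k1 = b" "inj_on f1 {0..k1}" "inj_on g1 {0..<k1}"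
     "\<forall>i<k1. ends (g1 i) = {f1 i, f1 (Suc i)}" "f1 ` {0..k1} \<subseteq> V1" "g1 ` {0..<k1} \<subseteq> E1" "P1 = g1 ` {0..<k1}"
    using assms(1) unfolding is_path_def by blast
  obtain k2 f2 g2 where q: "f2 0 = b" "f2 k2 = c" "inj_on f2 {0..k2}" "inj_on g2 {0..<k2}"
     "\<forall>i<k2. ends (g2 i) = {f2 i, f2 (Suc i)}" "f2 ` {0..k2} \<subseteq> V2" "g2 ` {0..<k2} \<subseteq> E2" "P2 = g2 ` {0..<k2}"
    using assms(2) unfolding is_path_def by blast
  define f where "f i = (if i \<le> k1 then f1 i else f2 (i - k1))" for i
  define g where "g i = (if i < k1 then g1 i else g2 (i - k1))" for i
  have A: "f 0 = a" "f (k1+k2) = c" using p q by (auto simp: f_def)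
  have B: "inj_on f {0..k1+k2}"
  proof (rule inj_onI)
    fix i j assume ij: "i \<in> {0..k1+k2}" "j \<in> {0..k1+k2}" "f i = f j"
    show "i = j"
    proof (cases "i \<le> k1"; cases "j \<le> k1")
      assume "i \<le> k1" "j \<le> k1" then show ?thesis using ij p(3) by (auto simp: f_def inj_on_def)
    next
      assume h: "\<not> i \<le> k1" "\<not> j \<le> k1"
      then have "i - k1 = j - k1" using ij inj_onD[OF q(3), of "i - k1" "j - k1"] by (simp add: f_def)
      then show ?thesis using h by simp
    next
      assume h: "i \<le> k1" "\<not> j \<le> k1"
      have "f1 i \<in> V1" using p(6) h by auto
      moreover have "f2 (j - k1) \<in> V2" using q(6) ij by auto
      moreover have "f2 (j - k1) \<noteq> b"
      proof
        assume "f2 (j - k1) = b"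
        moreover have "j - k1 \<in> {0..k2}" "(0::nat) \<in> {0..k2}" using ij by auto
        ultimately have "j - k1 = 0" using q(1) inj_onD[OF q(3), of "j - k1" 0] by simp
        then show False using h by simp
      qed
      ultimately show ?thesis using ij h assms(3) by (auto simp: f_def)
    next
      assume h: "\<not> i \<le> k1" "j \<le> k1"
      have "f1 j \<in> V1" using p(6) h by auto
      moreover have "f2 (i - k1) \<in> V2" using q(6) ij by auto
      moreover have "f2 (i - k1) \<noteq> b"
      proof
        assume "f2 (i - k1) = b"
        moreover have "i - k1 \<in> {0..k2}" "(0::nat) \<in> {0..k2}" using ij by auto
        ultimately have "i - k1 = 0" using q(1) inj_onD[OF q(3), of "i - k1" 0] by simp
        then show False using h by simp
      qed
      ultimately show ?thesis using ij h assms(3) by (auto simp: f_def)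
    qed
  qed
  have C: "inj_on g {0..<k1+k2}"
  proof (rule inj_onI)
    fix i j assume ij: "i \<in> {0..<k1+k2}" "j \<in> {0..<k1+k2}" "g i = g j"
    show "i = j"
    proof (cases "i < k1"; cases "j < k1")
      assume "i < k1" "j < k1" then show ?thesis using ij p(4) by (auto simp: g_def inj_on_def)
    next
      assume h: "\<not> i < k1" "\<not> j < k1"
      then have "i - k1 = j - k1" using ij inj_onD[OF q(4), of "i - k1" "j - k1"] by (simp add: g_def)
      then show ?thesis using h by simp
    next
      assume h: "i < k1" "\<not> j < k1"
      have "g1 i \<in> E1" using p(7) h by auto
      moreover have "g2 (j - k1) \<in> E2" using q(7) ij h by auto
      ultimately show ?thesis using ij h assms(4) by (auto simp: g_def)
    next
      assume h: "\<not> i < k1" "j < k1"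
      have "g1 j \<in> E1" using p(7) h by auto
      moreover have "g2 (i - k1) \<in> E2" using q(7) ij h by auto
      ultimately show ?thesis using ij h assms(4) by (auto simp: g_def)
    qed
  qed
  have D: "\<forall>i<k1+k2. ends (g i) = {f i, f (Suc i)}"
  proof (intro allI impI)
    fix i assume i: "i < k1 + k2"
    show "ends (g i) = {f i, f (Suc i)}"
    proof (cases "i < k1")
      case True then show ?thesis using p(5) by (auto simp: f_def g_def)
    next
      case False
      then have "i - k1 < k2" "Suc i - k1 = Suc (i - k1)" using i by auto
      then show ?thesis using q(5) False p(2) q(1) by (auto simp: f_def g_def)
    qed
  qed
  have E: "f ` {0..k1+k2} \<subseteq> V1 \<union> V2"
  proof
    fix x assume "x \<in> f ` {0..k1+k2}"
    then obtain i where i: "i \<le> k1+k2" "x = f i" by auto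
    show "x \<in> V1 \<union> V2"
    proof (cases "i \<le> k1")
      case True then show ?thesis using i p(6) by (auto simp: f_def)
    next
      case False then have "i - k1 \<in> {0..k2}" using i by auto
      then have "f2 (i - k1) \<in> V2" using q(6) by blast
      then show ?thesis using i False by (simp add: f_def)
    qed
  qed
  have F: "g ` {0..<k1+k2} = P1 \<union> P2"
  proof
    show "g ` {0..<k1+k2} \<subseteq> P1 \<union> P2" using p(8) q(8) by (auto simp: g_def)
    show "P1 \<union> P2 \<subseteq> g ` {0..<k1+k2}"
    proof
      fix x assume "x \<in> P1 \<union> P2"
      then consider i where "i < k1" "x = g1 i" | i where "i < k2" "x = g2 i" using p(8) q(8) by auto
      then show "x \<in> g ` {0..<k1+k2}"
      proof cases
        case (1 i) then show ?thesis by (force simp: g_def)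
      next
        case (2 i) then have "g (i + k1) = x" by (simp add: g_def)
        moreover have "i + k1 \<in> {0..<k1+k2}" using 2 by simp
        ultimately show ?thesis by (metis image_eqI)
      qed
    qed
  qed
  have G: "g ` {0..<k1+k2} \<subseteq> E1 \<union> E2" using F p(7,8) q(7,8) by auto
  show ?thesis unfolding is_path_def
    apply (rule exI[of _ "k1+k2"], rule exI[of _ f], rule exI[of _ g])
    using A B C D E F[symmetric] G by (intro conjI) assumption+
qed



lemma chain_ineq:
  fixes x :: "nat \<Rightarrow> 'a::metric_space"
  shows "a \<le> b \<Longrightarrow> dist (x a) (x b) \<le> (\<Sum>i\<in>{a..<b}. dist (x i) (x (Suc i)))"
proof (induction b rule: dec_induct)
  case base then show ?case by simp
next
  case (step b)
  have "dist (x a) (x (Suc b)) \<le> dist (x a) (x b) + dist (x b) (x (Suc b))" by (rule dist_triangle)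
  also have "\<dots> \<le> (\<Sum>i\<in>{a..<b}. dist (x i) (x (Suc i))) + dist (x b) (x (Suc b))" using step.IH by simp
  also have "\<dots> = (\<Sum>i\<in>{a..<Suc b}. dist (x i) (x (Suc i)))" using step.hyps by simp
  finally show ?case .
qed

lemma polygon_ineq:
  assumes "polygonal V' E' ends" "realisable V' E' ends l" "e \<in> E'"
  shows "2 * l e \<le> sum l E'"
proof -
  obtain n :: nat and f g where n: "n \<ge> 2" "bij_betw f {0..<n} V'" "bij_betw g {0..<n} E'"
    "\<forall>i<n. ends (g i) = {f i, f ((i + 1) mod n)}"
    using assms(1) unfolding polygonal_def by blast
  obtain p :: "'a \<Rightarrow> real^2" where p: "\<forall>e\<in>E'. \<forall>u v. ends e = {u, v} \<longrightarrow> dist (p u) (p v) = l e"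
    using assms(2) unfolding realisable_def by blast
  define x where "x i = p (f (i mod n))" for i
  define d where "d i = dist (x i) (x (Suc i))" for i
  have ld: "l (g i) = d i" if "i < n" for i
  proof -
    have "g i \<in> E'" using n(3) that by (auto simp: bij_betw_def)
    then have "dist (p (f i)) (p (f ((i + 1) mod n))) = l (g i)" using p n(4) that by blast
    then show ?thesis using that by (simp add: d_def x_def)
  qed
  obtain j where j: "j < n" "e = g j" using n(3) assms(3) unfolding bij_betw_def by auto
  have s1: "dist (x 0) (x j) \<le> sum d {0..<j}" using chain_ineq[of 0 j x] by (simp add: d_def)
  have s2: "dist (x (Suc j)) (x n) \<le> sum d {Suc j..<n}" using chain_ineq[of "Suc j" n x] j by (simp add: d_def)
  have xn: "x n = x 0" by (simp add: x_def)
  have "d j \<le> dist (x j) (x 0) + dist (x 0) (x (Suc j))" unfolding d_def by (rule dist_triangle)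
  also have "\<dots> \<le> sum d {0..<j} + sum d {Suc j..<n}" using s1 s2 xn by (simp add: dist_commute)
  finally have "2 * d j \<le> sum d {0..<j} + d j + sum d {Suc j..<n}" by simp
  also have "\<dots> = sum d {0..<n}"
  proof -
    have "sum d {0..<Suc j} + sum d {Suc j..<n} = sum d {0..<n}"
      using j by (intro sum.atLeastLessThan_concat) auto
    moreover have "sum d {0..<Suc j} = sum d {0..<j} + d j" by (rule sum.atLeastLessThan_Suc) simp
    ultimately show ?thesis by simp
  qed
  also have "\<dots> = sum (l \<circ> g) {0..<n}" using ld by simp
  also have "\<dots> = sum l E'" using n(3) unfolding bij_betw_def by (metis sum.reindex)
  finally show ?thesis using ld j by simp
qed

lemma cycle_exists:
  assumes P: "is_path ends V2 E2 s t P" and Q: "is_path ends V1 E1 t s Q"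
    and VV: "V1 \<inter> V2 = {s, t}" and EE: "E1 \<inter> E2 = {}" and st: "s \<noteq> t"
  shows "\<exists>V'. subgraph V' (P \<union> Q) (V1 \<union> V2) (E1 \<union> E2) ends \<and> polygonal V' (P \<union> Q) ends"
proof -
  obtain k2 f2 g2 where q: "f2 0 = s" "f2 k2 = t" "inj_on f2 {0..k2}" "inj_on g2 {0..<k2}"
     "\<forall>i<k2. ends (g2 i) = {f2 i, f2 (Suc i)}" "f2 ` {0..k2} \<subseteq> V2" "g2 ` {0..<k2} \<subseteq> E2" "P = g2 ` {0..<k2}"
    using P unfolding is_path_def by blast
  obtain k1 f1 g1 where p: "f1 0 = t" "f1 k1 = s" "inj_on f1 {0..k1}" "inj_on g1 {0..<k1}"
     "\<forall>i<k1. ends (g1 i) = {f1 i, f1 (Suc i)}" "f1 ` {0..k1} \<subseteq> V1" "g1 ` {0..<k1} \<subseteq> E1" "Q = g1 ` {0..<k1}"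
    using Q unfolding is_path_def by blast
  have k1: "k1 \<ge> 1" using p(1,2) st by (cases k1) auto
  have k2: "k2 \<ge> 1" using q(1,2) st by (cases k2) auto
  define n where "n = k2 + k1"
  define F where "F i = (if i \<le> k2 then f2 i else f1 (i - k2))" for i
  define G where "G i = (if i < k2 then g2 i else g1 (i - k2))" for i
  have B: "inj_on F {0..<n}"
  proof (rule inj_onI)
    fix i j assume ij: "i \<in> {0..<n}" "j \<in> {0..<n}" "F i = F j"
    have mixed: "False" if h: "a \<le> k2" "\<not> b \<le> k2" "b < n" "F a = F b" for a b
    proof -
      have "f2 a \<in> V2" using q(6) h by auto
      moreover have bk: "b - k2 \<in> {0..k1}" using h by (auto simp: n_def)
      then have "f1 (b - k2) \<in> V1" using p(6) by blast
      moreover have "f1 (b - k2) \<noteq> t"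
      proof
        assume "f1 (b - k2) = t"
        then have "b - k2 = 0" using p(1) bk inj_onD[OF p(3), of "b - k2" 0] by simp
        then show False using h by simp
      qed
      moreover have "f1 (b - k2) \<noteq> s"
      proof
        assume "f1 (b - k2) = s"
        then have "b - k2 = k1" using p(2) bk inj_onD[OF p(3), of "b - k2" k1] by simp
        then show False using h by (simp add: n_def)
      qed
      moreover have "F a = f2 a" "F b = f1 (b - k2)" using h by (auto simp: F_def)
      ultimately show False using h VV by auto
    qed
    show "i = j"
    proof (cases "i \<le> k2"; cases "j \<le> k2")
      assume "i \<le> k2" "j \<le> k2" then show ?thesis using ij q(3) by (auto simp: F_def inj_on_def)
    next
      assume h: "\<not> i \<le> k2" "\<not> j \<le> k2"
      then have "i - k2 = j - k2" using ij inj_onD[OF p(3), of "i - k2" "j - k2"] by (simp add: F_def n_def)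
      then show ?thesis using h by simp
    next
      assume h: "i \<le> k2" "\<not> j \<le> k2"
      then show ?thesis using mixed[of i j] ij by simp
    next
      assume h: "\<not> i \<le> k2" "j \<le> k2"
      then show ?thesis using mixed[of j i] ij by simp
    qed
  qed
  have C: "inj_on G {0..<n}"
  proof (rule inj_onI)
    fix i j assume ij: "i \<in> {0..<n}" "j \<in> {0..<n}" "G i = G j"
    show "i = j"
    proof (cases "i < k2"; cases "j < k2")
      assume "i < k2" "j < k2" then show ?thesis using ij q(4) by (auto simp: G_def inj_on_def)
    next
      assume h: "\<not> i < k2" "\<not> j < k2"
      then have "i - k2 = j - k2" using ij inj_onD[OF p(4), of "i - k2" "j - k2"] by (simp add: G_def n_def)
      then show ?thesis using h by simp
    next
      assume h: "i < k2" "\<not> j < k2"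
      have "g2 i \<in> E2" using q(7) h by auto
      moreover have "g1 (j - k2) \<in> E1" using p(7) ij h by (auto simp: n_def)
      ultimately show ?thesis using ij h EE by (auto simp: G_def)
    next
      assume h: "\<not> i < k2" "j < k2"
      have "g2 j \<in> E2" using q(7) h by auto
      moreover have "g1 (i - k2) \<in> E1" using p(7) ij h by (auto simp: n_def)
      ultimately show ?thesis using ij h EE by (auto simp: G_def)
    qed
  qed
  have D: "ends (G i) = {F i, F ((i + 1) mod n)}" if i: "i < n" for i
  proof (cases "i < k2")
    case True
    then have "(i + 1) mod n = Suc i" using k1 by (simp add: n_def)
    then show ?thesis using q(5) True by (auto simp: F_def G_def)
  next
    case False
    then have e: "ends (G i) = {f1 (i - k2), f1 (Suc (i - k2))}" using p(5) i by (simp add: G_def n_def)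
    have fi: "F i = f1 (i - k2)" using False q(2) p(1) by (auto simp: F_def)
    show ?thesis
    proof (cases "i + 1 < n")
      case True
      then have "(i + 1) mod n = i + 1" by simp
      moreover have "F (i+1) = f1 (Suc (i - k2))" using False by (simp add: F_def Suc_diff_le)
      ultimately show ?thesis using e fi by simp
    next
      case False2: False
      then have "i + 1 = n" using i by simp
      then have "(i + 1) mod n = 0" "Suc (i - k2) = k1" using False by (auto simp: n_def)
      moreover have "F 0 = s" using q(1) by (simp add: F_def)
      ultimately show ?thesis using e fi p(2) by simp
    qed
  qed
  have GP: "G ` {0..<n} = P \<union> Q"
  proof
    show "G ` {0..<n} \<subseteq> P \<union> Q"
    proof
      fix x assume "x \<in> G ` {0..<n}"
      then obtain i where i: "i < n" "x = G i" by auto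
      show "x \<in> P \<union> Q"
      proof (cases "i < k2")
        case True then show ?thesis using i q(8) by (simp add: G_def)
      next
        case False then have "i - k2 \<in> {0..<k1}" using i by (auto simp: n_def)
        then show ?thesis using i p(8) False by (simp add: G_def)
      qed
    qed
    show "P \<union> Q \<subseteq> G ` {0..<n}"
    proof
      fix x assume "x \<in> P \<union> Q"
      then consider i where "i < k2" "x = g2 i" | i where "i < k1" "x = g1 i" using p(8) q(8) by auto
      then show "x \<in> G ` {0..<n}"
      proof cases
        case (1 i) then have "G i = x" "i \<in> {0..<n}" by (auto simp: G_def n_def)
        then show ?thesis by (metis image_eqI)
      next
        case (2 i) then have "G (i + k2) = x" "i + k2 \<in> {0..<n}" by (auto simp: G_def n_def)
        then show ?thesis by (metis image_eqI)
      qed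
    qed
  qed
  have FV: "F ` {0..<n} \<subseteq> V1 \<union> V2"
  proof
    fix x assume "x \<in> F ` {0..<n}"
    then obtain i where i: "i < n" "x = F i" by auto
    show "x \<in> V1 \<union> V2"
    proof (cases "i \<le> k2")
      case True then have "i \<in> {0..k2}" by simp
      then have "f2 i \<in> V2" using q(6) by blast
      then show ?thesis using i True by (simp add: F_def)
    next
      case False then have "i - k2 \<in> {0..k1}" using i by (auto simp: n_def)
      then have "f1 (i - k2) \<in> V1" using p(6) by blast
      then show ?thesis using i False by (simp add: F_def)
    qed
  qed
  have sub: "subgraph (F ` {0..<n}) (P \<union> Q) (V1 \<union> V2) (E1 \<union> E2) ends"
    unfolding subgraph_def
  proof (intro conjI)
    show "F ` {0..<n} \<subseteq> V1 \<union> V2" by (rule FV)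
    show "P \<union> Q \<subseteq> E1 \<union> E2" using p(7,8) q(7,8) by auto
    show "\<forall>e\<in>P \<union> Q. ends e \<subseteq> F ` {0..<n}"
    proof
      fix e assume "e \<in> P \<union> Q"
      then obtain i where i: "i < n" "e = G i" using GP by (metis atLeastLessThan_iff imageE)
      have "(i + 1) mod n < n" using i by simp
      then show "ends e \<subseteq> F ` {0..<n}" using D[OF i(1)] i by auto
    qed
  qed
  have pol: "polygonal (F ` {0..<n}) (P \<union> Q) ends"
    unfolding polygonal_def
    apply (rule exI[of _ n], intro conjI)
    subgoal using k1 k2 by (simp add: n_def)
    apply (rule exI[of _ F], rule exI[of _ G], intro conjI)
    subgoal using B by (simp add: bij_betw_def)
    subgoal using C GP by (simp add: bij_betw_def)
    subgoal using D by blast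
    done
  show ?thesis using sub pol by blast
qed



definition rl :: "('e \<Rightarrow> 'v set) \<Rightarrow> 'e set \<Rightarrow> ('e \<Rightarrow> real) \<Rightarrow> ('v \<Rightarrow> real^2) \<Rightarrow> bool" where
  "rl ends E l p \<longleftrightarrow> (\<forall>e\<in>E. \<forall>u v. ends e = {u, v} \<longrightarrow> dist (p u) (p v) = l e)"

definition Hyp :: "('e \<Rightarrow> 'v set) \<Rightarrow> 'v set \<Rightarrow> 'e set \<Rightarrow> ('e \<Rightarrow> real) \<Rightarrow> bool" where
  "Hyp ends V E l \<longleftrightarrow> (\<forall>V' E'. subgraph V' E' V E ends \<and> polygonal V' E' ends \<longrightarrow> realisable V' E' ends l)"

definition Inv :: "('e \<Rightarrow> 'v set) \<Rightarrow> 'v set \<Rightarrow> 'e set \<Rightarrow> ('e \<Rightarrow> real) \<Rightarrow> 'v \<Rightarrow> 'v \<Rightarrow> bool" where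
  "Inv ends V E l s t \<longleftrightarrow> (\<exists>m M. 0 \<le> m \<and> m \<le> M \<and>
     (\<forall>d. m \<le> d \<and> d \<le> M \<longrightarrow> (\<exists>p. rl ends E l p \<and> dist (p s) (p t) = d)) \<and>
     (\<exists>P. is_path ends V E s t P \<and> sum l P = M) \<and>
     (m = 0 \<or> (\<exists>Q e. is_path ends V E t s Q \<and> e \<in> Q \<and> m = l e - sum l (Q - {e}))))"

lemma ttspg_basic:
  "ttspg ends V E s t \<Longrightarrow> s \<noteq> t \<and> s \<in> V \<and> t \<in> V \<and> (\<forall>e\<in>E. ends e \<subseteq> V) \<and> finite E"
proof (induction rule: ttspg.induct)
  case (edge s t e) then show ?case by auto
next
  case (series V1 E1 s1 t1 V2 E2 s2 t2)
  have "s2 \<noteq> t1"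
  proof
    assume "s2 = t1"
    then have "s2 \<in> V1 \<inter> V2" using series.IH by simp
    then have "s2 = s1" using series.hyps(4) by simp
    then show False using series.IH series.hyps(3) by simp
  qed
  then show ?case using series.IH by auto
next
  case (parallel V1 E1 s1 t1 V2 E2 s2 t2)
  then show ?case by auto
qed

lemma rl_transfer:
  assumes "rl ends E2 l p2" "\<forall>e\<in>E2. ends e \<subseteq> V2" "\<forall>x\<in>V2. q x = T (p2 x)"
    "\<forall>x y. dist (T x) (T y) = dist x y"
  shows "rl ends E2 l q"
  unfolding rl_def
proof (intro ballI allI impI)
  fix e u v assume e: "e \<in> E2" "ends e = {u, v}"
  then have "u \<in> V2" "v \<in> V2" using assms(2) by auto
  then have "dist (q u) (q v) = dist (p2 u) (p2 v)" using assms(3,4) by simp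
  then show "dist (q u) (q v) = l e" using assms(1) e unfolding rl_def by simp
qed

lemma rl_union: "rl ends E1 l q \<Longrightarrow> rl ends E2 l q \<Longrightarrow> rl ends (E1 \<union> E2) l q"
  unfolding rl_def by blast

lemma subgraph_mono: "subgraph V' E' V1 E1 ends \<Longrightarrow> subgraph V' E' (V1 \<union> V2) (E1 \<union> E2) ends"
  unfolding subgraph_def by blast

lemma Hyp_mono: "Hyp ends (V1 \<union> V2) (E1 \<union> E2) l \<Longrightarrow> Hyp ends V1 E1 l"
  unfolding Hyp_def using subgraph_mono by blast

lemma cross_bound:
  assumes P: "is_path ends V2 E2 s t P" and Q: "is_path ends V1 E1 t s Q" and e: "e \<in> Q"
    and VV: "V1 \<inter> V2 = {s, t}" and EE: "E1 \<inter> E2 = {}" and st: "s \<noteq> t"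
    and H: "Hyp ends (V1 \<union> V2) (E1 \<union> E2) l"
  shows "l e - sum l (Q - {e}) \<le> sum l P"
proof -
  obtain V' where V': "subgraph V' (P \<union> Q) (V1 \<union> V2) (E1 \<union> E2) ends" "polygonal V' (P \<union> Q) ends"
    using cycle_exists[OF P Q VV EE st] by blast
  then have R: "realisable V' (P \<union> Q) ends l" using H unfolding Hyp_def by blast
  have "2 * l e \<le> sum l (P \<union> Q)" using polygon_ineq[OF V'(2) R, of e] e by simp
  moreover have "sum l (P \<union> Q) = sum l P + sum l Q"
    using path_sub[OF P] path_sub[OF Q] EE by (intro sum.union_disjoint) auto
  moreover have "sum l Q = l e + sum l (Q - {e})"
    using path_sub[OF Q] e by (simp add: sum.remove)
  ultimately show ?thesis by simp
qed

lemma inv_main: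
  assumes "ttspg ends V E s t"
  shows "(\<forall>e\<in>E. 0 \<le> l e) \<Longrightarrow> Hyp ends V E l \<Longrightarrow> Inv ends V E l s t"
  using assms
proof (induction rule: ttspg.induct)
  case (edge s t e)
  have le: "0 \<le> l e" using edge.prems by simp
  define p where "p x = (if x = s then (0::real^2) else vector [l e, 0])" for x
  have dst: "dist (p s) (p t) = l e" using edge.hyps le by (simp add: p_def dist2)
  have "rl ends {e} l p"
    unfolding rl_def
  proof (intro ballI allI impI)
    fix e' u v assume "e' \<in> {e}" "ends e' = {u, v}"
    then have "e' = e" "{u, v} = {s, t}" using edge.hyps by auto
    then have "(u = s \<and> v = t) \<or> (u = t \<and> v = s)" by (auto simp: doubleton_eq_iff)
    then show "dist (p u) (p v) = l e'" using dst \<open>e' = e\<close> by (auto simp: dist_commute)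
  qed
  moreover have "is_path ends {s, t} {e} s t {e}" using edge.hyps by (rule path_edge)
  moreover have "is_path ends {s, t} {e} t s {e}" using path_edge[of t s ends e] edge.hyps
    by (simp add: insert_commute)
  ultimately have F: "rl ends {e} l p" "is_path ends {s, t} {e} s t {e}" "is_path ends {s, t} {e} t s {e}" by blast+
  show ?case unfolding Inv_def
  proof (rule exI[of _ "l e"], rule exI[of _ "l e"], intro conjI)
    show "0 \<le> l e" "l e \<le> l e" using le by simp_all
    show "\<forall>d. l e \<le> d \<and> d \<le> l e \<longrightarrow> (\<exists>p. rl ends {e} l p \<and> dist (p s) (p t) = d)"
      using F(1) dst by auto
    show "\<exists>P. is_path ends {s, t} {e} s t P \<and> sum l P = l e" using F(2) by (intro exI[of _ "{e}"]) simp
    show "l e = 0 \<or> (\<exists>Q ea. is_path ends {s, t} {e} t s Q \<and> ea \<in> Q \<and> l e = l ea - sum l (Q - {ea}))"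
      using F(3) by (intro disjI2 exI[of _ "{e}"] exI[of _ e]) simp
  qed
next
  case (series V1 E1 s1 t1 V2 E2 s2 t2)
  have nn1: "\<forall>e\<in>E1. 0 \<le> l e" and nn2: "\<forall>e\<in>E2. 0 \<le> l e" using series.prems by auto
  have H1: "Hyp ends V1 E1 l" using series.prems Hyp_mono by blast
  have H2: "Hyp ends V2 E2 l" using series.prems Hyp_mono[of ends V2 V1 E2 E1 l] by (simp add: Un_commute)
  have I1: "Inv ends V1 E1 l s1 t1" using series.IH(1) nn1 H1 by blast
  have I2: "Inv ends V2 E2 l s2 t2" using series.IH(2) nn2 H2 by blast
  have b1: "s1 \<noteq> t1 \<and> s1 \<in> V1 \<and> t1 \<in> V1 \<and> (\<forall>e\<in>E1. ends e \<subseteq> V1) \<and> finite E1"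
    using ttspg_basic[OF series.hyps(1)] .
  have b2: "s2 \<noteq> t2 \<and> s2 \<in> V2 \<and> t2 \<in> V2 \<and> (\<forall>e\<in>E2. ends e \<subseteq> V2) \<and> finite E2"
    using ttspg_basic[OF series.hyps(2)] .
  have t2: "t2 = s1" and VV: "V1 \<inter> V2 = {s1}" and EE: "E1 \<inter> E2 = {}" using series.hyps by auto
  have s2V1: "s2 \<notin> V1" using b2 VV t2 by auto
  obtain m1 M1 where m1: "0 \<le> m1" "m1 \<le> M1"
     "\<forall>d. m1 \<le> d \<and> d \<le> M1 \<longrightarrow> (\<exists>p. rl ends E1 l p \<and> dist (p s1) (p t1) = d)"
     and P1: "\<exists>P. is_path ends V1 E1 s1 t1 P \<and> sum l P = M1"
     and Q1: "m1 = 0 \<or> (\<exists>Q e. is_path ends V1 E1 t1 s1 Q \<and> e \<in> Q \<and> m1 = l e - sum l (Q - {e}))"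
    using I1 unfolding Inv_def by blast
  obtain m2 M2 where m2: "0 \<le> m2" "m2 \<le> M2"
     "\<forall>d. m2 \<le> d \<and> d \<le> M2 \<longrightarrow> (\<exists>p. rl ends E2 l p \<and> dist (p s2) (p t2) = d)"
     and P2: "\<exists>P. is_path ends V2 E2 s2 t2 P \<and> sum l P = M2"
     and Q2: "m2 = 0 \<or> (\<exists>Q e. is_path ends V2 E2 t2 s2 Q \<and> e \<in> Q \<and> m2 = l e - sum l (Q - {e}))"
    using I2 unfolding Inv_def by blast
  obtain PP1 where PP1: "is_path ends V1 E1 s1 t1 PP1" "sum l PP1 = M1" using P1 by blast
  obtain PP2 where PP2: "is_path ends V2 E2 s2 s1 PP2" "sum l PP2 = M2" using P2 t2 by blast
  have sumU: "sum l (A \<union> B) = sum l A + sum l B" if "A \<subseteq> E1" "B \<subseteq> E2" "finite A" "finite B" for A B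
    using that EE by (intro sum.union_disjoint) auto
  define m where "m = max 0 (max (m1 - M2) (m2 - M1))"
  define M where "M = M1 + M2"
  have mM: "0 \<le> m" "m \<le> M" using m1 m2 unfolding m_def M_def by auto
  have real: "\<exists>p. rl ends (E1 \<union> E2) l p \<and> dist (p s2) (p t1) = d" if d: "m \<le> d" "d \<le> M" for d
  proof -
    define d1 where "d1 = (if M1 - M2 > d then max m1 (M2 + d) else M1)"
    define d2 where "d2 = (if M2 - M1 > d then max m2 (M1 + d) else M2)"
    have r1: "m1 \<le> d1" "d1 \<le> M1" "m2 \<le> d2" "d2 \<le> M2" "\<bar>d1 - d2\<bar> \<le> d" "d \<le> d1 + d2"
      using d m1 m2 unfolding d1_def d2_def m_def M_def by (auto split: if_splits)
    obtain p1 where p1: "rl ends E1 l p1" "dist (p1 s1) (p1 t1) = d1" using m1(3) r1 by blast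
    obtain p2 where p2: "rl ends E2 l p2" "dist (p2 s2) (p2 s1) = d2" using m2(3) r1 t2 by blast
    obtain A B C :: "real^2" where ABC: "dist A B = d2" "dist B C = d1" "dist A C = d"
      using triangle_exists[of d1 d2 d] r1 m1 m2 by auto
    obtain T1 where T1: "\<forall>x y. dist (T1 x) (T1 y) = dist x y" "T1 (p1 s1) = B" "T1 (p1 t1) = C"
      using isometry_exists[of "p1 s1" "p1 t1" B C] p1 ABC by auto
    obtain T2 where T2: "\<forall>x y. dist (T2 x) (T2 y) = dist x y" "T2 (p2 s2) = A" "T2 (p2 s1) = B"
      using isometry_exists[of "p2 s2" "p2 s1" A B] p2 ABC by auto
    define q where "q x = (if x \<in> V1 then T1 (p1 x) else T2 (p2 x))" for x
    have "rl ends E1 l q" using rl_transfer[OF p1(1), of V1 q T1] b1 T1 by (simp add: q_def)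
    moreover have "rl ends E2 l q"
    proof (rule rl_transfer[OF p2(1), of V2 q T2])
      show "\<forall>e\<in>E2. ends e \<subseteq> V2" using b2 by blast
      show "\<forall>x\<in>V2. q x = T2 (p2 x)"
      proof
        fix x assume x: "x \<in> V2"
        show "q x = T2 (p2 x)"
        proof (cases "x \<in> V1")
          case True then have "x = s1" using x VV by blast
          then show ?thesis using T1 T2 True by (simp add: q_def)
        next
          case False then show ?thesis by (simp add: q_def)
        qed
      qed
      show "\<forall>x y. dist (T2 x) (T2 y) = dist x y" using T2 by blast
    qed
    moreover have "dist (q s2) (q t1) = d" using s2V1 b1 T1 T2 ABC by (simp add: q_def)
    ultimately show ?thesis using rl_union by blast
  qed
  have pathP: "is_path ends (V1 \<union> V2) (E1 \<union> E2) s2 t1 (PP2 \<union> PP1)"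
    using path_concat[OF PP2(1) PP1(1)] VV EE by (simp add: Un_commute Int_commute)
  have sumP: "sum l (PP2 \<union> PP1) = M"
    using sumU[of PP1 PP2] path_sub[OF PP1(1)] path_sub[OF PP2(1)] PP1(2) PP2(2)
    by (simp add: M_def Un_commute)
  have Qw: "m = 0 \<or> (\<exists>Q e. is_path ends (V1 \<union> V2) (E1 \<union> E2) t1 s2 Q \<and> e \<in> Q \<and> m = l e - sum l (Q - {e}))"
  proof (cases "m = 0")
    case True then show ?thesis by simp
  next
    case False
    show ?thesis
    proof (cases "m = m1 - M2")
      case True
      then have "m1 \<noteq> 0" using False m2 mM by auto
      then obtain Q e where Q: "is_path ends V1 E1 t1 s1 Q" "e \<in> Q" "m1 = l e - sum l (Q - {e})"
        using Q1 by blast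
      have pq: "is_path ends (V1 \<union> V2) (E1 \<union> E2) t1 s2 (Q \<union> PP2)"
        using path_concat[OF Q(1) path_rev[OF PP2(1)]] VV EE by simp
      have eP: "e \<notin> PP2" using Q(2) path_sub[OF Q(1)] path_sub[OF PP2(1)] EE by blast
      have "(Q \<union> PP2) - {e} = (Q - {e}) \<union> PP2" using eP by blast
      moreover have "sum l ((Q - {e}) \<union> PP2) = sum l (Q - {e}) + sum l PP2"
        using sumU[of "Q - {e}" PP2] path_sub[OF Q(1)] path_sub[OF PP2(1)] by auto
      ultimately have "m = l e - sum l ((Q \<union> PP2) - {e})" using True Q(3) PP2(2) by simp
      then show ?thesis using pq Q(2) by blast
    next
      case False2: False
      then have mm: "m = m2 - M1" using False unfolding m_def by (auto simp: max_def split: if_splits)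
      then have "m2 \<noteq> 0" using False m1 mM by auto
      then obtain Q e where Q: "is_path ends V2 E2 s1 s2 Q" "e \<in> Q" "m2 = l e - sum l (Q - {e})"
        using Q2 t2 by blast
      have pq: "is_path ends (V1 \<union> V2) (E1 \<union> E2) t1 s2 (PP1 \<union> Q)"
        using path_concat[OF path_rev[OF PP1(1)] Q(1)] VV EE by simp
      have eP: "e \<notin> PP1" using Q(2) path_sub[OF Q(1)] path_sub[OF PP1(1)] EE by blast
      have "(PP1 \<union> Q) - {e} = PP1 \<union> (Q - {e})" using eP by blast
      moreover have "sum l (PP1 \<union> (Q - {e})) = sum l PP1 + sum l (Q - {e})"
        using sumU[of PP1 "Q - {e}"] path_sub[OF Q(1)] path_sub[OF PP1(1)] by auto
      ultimately have "m = l e - sum l ((PP1 \<union> Q) - {e})" using mm Q(3) PP1(2) by simp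
      then show ?thesis using pq Q(2) by blast
    qed
  qed
  show ?case unfolding Inv_def
    apply (rule exI[of _ m], rule exI[of _ M])
    using mM real pathP sumP Qw by blast
next
  case (parallel V1 E1 s1 t1 V2 E2 s2 t2)
  have nn1: "\<forall>e\<in>E1. 0 \<le> l e" and nn2: "\<forall>e\<in>E2. 0 \<le> l e" using parallel.prems by auto
  have H: "Hyp ends (V1 \<union> V2) (E1 \<union> E2) l" using parallel.prems by blast
  have H': "Hyp ends (V2 \<union> V1) (E2 \<union> E1) l" using H by (simp add: Un_commute)
  have H1: "Hyp ends V1 E1 l" using H Hyp_mono by blast
  have H2: "Hyp ends V2 E2 l" using H' Hyp_mono by blast
  have I1: "Inv ends V1 E1 l s1 t1" using parallel.IH(1) nn1 H1 by blast
  have I2: "Inv ends V2 E2 l s1 t1" using parallel.IH(2) nn2 H2 parallel.hyps by blast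
  have b1: "s1 \<noteq> t1 \<and> s1 \<in> V1 \<and> t1 \<in> V1 \<and> (\<forall>e\<in>E1. ends e \<subseteq> V1) \<and> finite E1"
    using ttspg_basic[OF parallel.hyps(1)] .
  have b2: "\<forall>e\<in>E2. ends e \<subseteq> V2"
    using ttspg_basic[OF parallel.hyps(2)] by blast
  have VV: "V1 \<inter> V2 = {s1, t1}" and EE: "E1 \<inter> E2 = {}" using parallel.hyps by auto
  obtain m1 M1 where m1: "0 \<le> m1" "m1 \<le> M1"
     "\<forall>d. m1 \<le> d \<and> d \<le> M1 \<longrightarrow> (\<exists>p. rl ends E1 l p \<and> dist (p s1) (p t1) = d)"
     and P1: "\<exists>P. is_path ends V1 E1 s1 t1 P \<and> sum l P = M1"
     and Q1: "m1 = 0 \<or> (\<exists>Q e. is_path ends V1 E1 t1 s1 Q \<and> e \<in> Q \<and> m1 = l e - sum l (Q - {e}))"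
    using I1 unfolding Inv_def by blast
  obtain m2 M2 where m2: "0 \<le> m2" "m2 \<le> M2"
     "\<forall>d. m2 \<le> d \<and> d \<le> M2 \<longrightarrow> (\<exists>p. rl ends E2 l p \<and> dist (p s1) (p t1) = d)"
     and P2: "\<exists>P. is_path ends V2 E2 s1 t1 P \<and> sum l P = M2"
     and Q2: "m2 = 0 \<or> (\<exists>Q e. is_path ends V2 E2 t1 s1 Q \<and> e \<in> Q \<and> m2 = l e - sum l (Q - {e}))"
    using I2 unfolding Inv_def by blast
  obtain PP1 where PP1: "is_path ends V1 E1 s1 t1 PP1" "sum l PP1 = M1" using P1 by blast
  obtain PP2 where PP2: "is_path ends V2 E2 s1 t1 PP2" "sum l PP2 = M2" using P2 by blast
  have c1: "m1 \<le> M2"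
  proof (cases "m1 = 0")
    case True then show ?thesis using m2 by simp
  next
    case False
    then obtain Q e where Q: "is_path ends V1 E1 t1 s1 Q" "e \<in> Q" "m1 = l e - sum l (Q - {e})"
      using Q1 by blast
    show ?thesis using cross_bound[OF PP2(1) Q(1) Q(2) VV EE _ H] b1 Q(3) PP2(2) by simp
  qed
  have c2: "m2 \<le> M1"
  proof (cases "m2 = 0")
    case True then show ?thesis using m1 by simp
  next
    case False
    then obtain Q e where Q: "is_path ends V2 E2 t1 s1 Q" "e \<in> Q" "m2 = l e - sum l (Q - {e})"
      using Q2 by blast
    have VV': "V2 \<inter> V1 = {s1, t1}" "E2 \<inter> E1 = {}" using VV EE by auto
    show ?thesis using cross_bound[OF PP1(1) Q(1) Q(2) VV'(1) VV'(2) _ H'] b1 Q(3) PP1(2) by simp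
  qed
  define m where "m = max m1 m2"
  define M where "M = min M1 M2"
  have real: "\<exists>p. rl ends (E1 \<union> E2) l p \<and> dist (p s1) (p t1) = d" if d: "m \<le> d" "d \<le> M" for d
  proof -
    obtain p1 where p1: "rl ends E1 l p1" "dist (p1 s1) (p1 t1) = d" using m1(3) d unfolding m_def M_def by auto
    obtain p2 where p2: "rl ends E2 l p2" "dist (p2 s1) (p2 t1) = d" using m2(3) d unfolding m_def M_def by auto
    obtain T where T: "\<forall>x y. dist (T x) (T y) = dist x y" "T (p2 s1) = p1 s1" "T (p2 t1) = p1 t1"
      using isometry_exists[of "p2 s1" "p2 t1" "p1 s1" "p1 t1"] p1 p2 by auto
    define q where "q x = (if x \<in> V1 then p1 x else T (p2 x))" for x
    have "rl ends E1 l q" using rl_transfer[OF p1(1), of V1 q id] b1 by (simp add: q_def)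
    moreover have "rl ends E2 l q"
    proof (rule rl_transfer[OF p2(1), of V2 q T])
      show "\<forall>e\<in>E2. ends e \<subseteq> V2" using b2 by blast
      show "\<forall>x\<in>V2. q x = T (p2 x)"
      proof
        fix x assume x: "x \<in> V2"
        show "q x = T (p2 x)"
        proof (cases "x \<in> V1")
          case True then have "x = s1 \<or> x = t1" using x VV by blast
          then show ?thesis using T True by (auto simp: q_def)
        next
          case False then show ?thesis by (simp add: q_def)
        qed
      qed
      show "\<forall>x y. dist (T x) (T y) = dist x y" using T by blast
    qed
    moreover have "dist (q s1) (q t1) = d" using b1 p1 by (simp add: q_def)
    ultimately show ?thesis using rl_union by blast
  qed
  have Pw: "\<exists>P. is_path ends (V1 \<union> V2) (E1 \<union> E2) s1 t1 P \<and> sum l P = M"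
  proof (cases "M1 \<le> M2")
    case True then show ?thesis using path_mono[OF PP1(1), of "V1 \<union> V2" "E1 \<union> E2"] PP1(2)
      unfolding M_def by auto
  next
    case False then show ?thesis using path_mono[OF PP2(1), of "V1 \<union> V2" "E1 \<union> E2"] PP2(2)
      unfolding M_def by auto
  qed
  have Qw: "m = 0 \<or> (\<exists>Q e. is_path ends (V1 \<union> V2) (E1 \<union> E2) t1 s1 Q \<and> e \<in> Q \<and> m = l e - sum l (Q - {e}))"
  proof (cases "m2 \<le> m1")
    case True
    then have "m = m1" by (simp add: m_def)
    then show ?thesis using Q1 path_mono[of ends V1 E1 t1 s1 _ "V1 \<union> V2" "E1 \<union> E2"] by blast
  next
    case False
    then have "m = m2" by (simp add: m_def)
    then show ?thesis using Q2 path_mono[of ends V2 E2 t1 s1 _ "V1 \<union> V2" "E1 \<union> E2"] by blast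
  qed
  have mM: "0 \<le> m" "m \<le> M" using m1 m2 c1 c2 unfolding m_def M_def by auto
  have s2: "s2 = s1" "t2 = t1" using parallel.hyps by auto
  show ?case unfolding Inv_def s2
    apply (rule exI[of _ m], rule exI[of _ M])
    using mM real Pw Qw by blast
qed


theorem mainTheorem5:
  fixes V :: "'v set" and E :: "'e set" and ends :: "'e \<Rightarrow> 'v set" and l :: "'e \<Rightarrow> real"
  assumes "graph V E ends"
    and "\<forall>e\<in>E. l e \<ge> 0"
    and "series_parallel V E ends"
  shows "realisable V E ends l \<longleftrightarrow>
    (\<forall>V' E'. subgraph V' E' V E ends \<and> polygonal V' E' ends \<longrightarrow> realisable V' E' ends l)"
proof
  assume R: "realisable V E ends l"
  show "\<forall>V' E'. subgraph V' E' V E ends \<and> polygonal V' E' ends \<longrightarrow> realisable V' E' ends l"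
  proof (intro allI impI)
    fix V' E' assume "subgraph V' E' V E ends \<and> polygonal V' E' ends"
    then have "E' \<subseteq> E" unfolding subgraph_def by blast
    then show "realisable V' E' ends l" using R unfolding realisable_def by blast
  qed
next
  assume H: "\<forall>V' E'. subgraph V' E' V E ends \<and> polygonal V' E' ends \<longrightarrow> realisable V' E' ends l"
  obtain s t where st: "ttspg ends V E s t" using assms(3) unfolding series_parallel_def by blast
  have "Inv ends V E l s t" using inv_main[OF st] assms(2) H unfolding Hyp_def by blast
  then obtain m M where "m \<le> M" "\<forall>d. m \<le> d \<and> d \<le> M \<longrightarrow> (\<exists>p. rl ends E l p \<and> dist (p s) (p t) = d)"
    unfolding Inv_def by blast
  then obtain p where "rl ends E l p" by blast
  then show "realisable V E ends l" unfolding realisable_def rl_def by blast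
qed

end
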